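(* Let $N\ge2$ and let $q$ be a primitive $4N$-th root of unity with $q^N=\mathbf{i}$. Then (a) $x_N=x_{N-1}=-1$; and (b) for a standard shifted tableau $\Lambda$ and an index $k$ with $q_k\neq q_{k+1}^{\pm1}$ (so that $\beta_k$ is defined), one has $\beta_k=0$ whenever $m_k+m_{k+1}+2=2N$.
   Context: $\mathbf{i}=\sqrt{-1}$, $[m]_{q^2}=(q^{2m}-q^{-2m})/(q^2-q^{-2})$. For each integer $m\ge0$ fix a square root $s_m$ of $[m+1]_{q^2}[m]_{q^2}$ and set $x_m=[m+1]_{q^2}-[m]_{q^2}-(q-q^{-1})s_m$. For a strict partition $\lambda$, its shifted diagram consists of boxes $(i,j)$ with $i\le j\le i+\lambda_i-1$; a standard shifted tableau $\Lambda$ fills it with $1,\dots,n$ increasing along rows and columns. For $1\le k\le n$, $(i_k,j_k)$ is the box containing $k$, $m_k=j_k-i_k$, $q_k=x_{m_k}$, and when $q_k\neq q_{k+1}^{\pm1}$, $\beta_k=1-(q-q^{-1})^2\left(\frac{q_{k+1}^{-1}q_k}{(q_{k+1}^{-1}q_k-1)^2}+\frac{q_{k+1}q_k}{(q_{k+1}q_k-1)^2}\right)$. *)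

theory Defs
  imports Complex_Main
begin

definition qint :: "complex \<Rightarrow> nat \<Rightarrow> complex" where
  "qint q m = (q ^ (2*m) - inverse q ^ (2*m)) / (q\<^sup>2 - inverse q ^ 2)"

text \<open>x_m = [m+1] - [m] - (q - q^{-1}) s_m, where s is a chosen family of square roots.\<close>
definition xm :: "complex \<Rightarrow> (nat \<Rightarrow> complex) \<Rightarrow> nat \<Rightarrow> complex" where
  "xm q s m = qint q (m+1) - qint q m - (q - inverse q) * s m"

definition primitive_root :: "nat \<Rightarrow> complex \<Rightarrow> bool" where
  "primitive_root n z \<longleftrightarrow> z ^ n = 1 \<and> (\<forall>d. 0 < d \<and> d < n \<longrightarrow> z ^ d \<noteq> 1)"

definition strict_partition :: "nat list \<Rightarrow> bool" where
  "strict_partition lam \<longleftrightarrow> (\<forall>p \<in> set lam. 0 < p) \<and> sorted_wrt (>) lam"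

text \<open>Shifted diagram, rows indexed from 1: boxes (i,j) with i \<le> j \<le> i + lam_i - 1.\<close>
definition shifted_diagram :: "nat list \<Rightarrow> (nat \<times> nat) set" where
  "shifted_diagram lam = {(i,j). 1 \<le> i \<and> i \<le> length lam \<and> i \<le> j \<and> j + 1 \<le> i + lam ! (i - 1)}"

definition standard_shifted_tableau :: "nat list \<Rightarrow> (nat \<times> nat \<Rightarrow> nat) \<Rightarrow> bool" where
  "standard_shifted_tableau lam T \<longleftrightarrow>
     bij_betw T (shifted_diagram lam) {1..sum_list lam} \<and>
     (\<forall>i j. (i,j) \<in> shifted_diagram lam \<and> (i, j+1) \<in> shifted_diagram lam \<longrightarrow> T (i,j) < T (i,j+1)) \<and>
     (\<forall>i j. (i,j) \<in> shifted_diagram lam \<and> (i+1, j) \<in> shifted_diagram lam \<longrightarrow> T (i,j) < T (i+1,j))"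

definition tab_m :: "nat list \<Rightarrow> (nat \<times> nat \<Rightarrow> nat) \<Rightarrow> nat \<Rightarrow> nat" where
  "tab_m lam T k = (let (i,j) = inv_into (shifted_diagram lam) T k in j - i)"

definition beta :: "complex \<Rightarrow> complex \<Rightarrow> complex \<Rightarrow> complex" where
  "beta q qk qk1 = 1 - (q - inverse q)\<^sup>2 *
     (inverse qk1 * qk / (inverse qk1 * qk - 1)\<^sup>2 + qk1 * qk / (qk1 * qk - 1)\<^sup>2)"

end

theory Submission imports Defs begin

lemma prod_one:
  fixes q :: complex
  assumes q0: "q \<noteq> 0" and q4: "q^4 \<noteq> 1"
  shows "(qint q (m+1) - qint q m)^2 - (q - inverse q)^2 * (qint q (m+1) * qint q m) = 1"
proof -
  define r where "r = inverse q"
  have qr: "q*r = 1" using q0 by (simp add: r_def)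
  have d1: "q\<^sup>2 - r ^ 2 \<noteq> 0"
  proof
    assume "q\<^sup>2 - r ^ 2 = 0"
    hence "q^4 = 1" using qr by algebra
    thus False using q4 by simp
  qed
  define Q where "Q = q^m"
  define R where "R = r^m"
  have QR: "Q*R = 1" using qr by (simp add: Q_def R_def flip: power_mult_distrib)
  have e1: "q^(2*m) = Q^2" "q^(2*(m+1)) = Q^2*q^2"
    "r^(2*m) = R^2" "r^(2*(m+1)) = R^2*r^2"
    by (simp_all add: Q_def R_def power_add mult_2 power2_eq_square)
  define A where "A = Q^2*q^2 - R^2*r^2"
  define B where "B = Q^2 - R^2"
  define D where "D = q\<^sup>2 - r ^ 2"
  have id: "(A - B)^2 - (q-r)^2 * (A * B) = D^2"
    unfolding A_def B_def D_def using qr QR by algebra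
  have "qint q (m+1) = A/D" "qint q m = B/D"
    unfolding qint_def e1 r_def[symmetric] A_def B_def D_def by simp_all
  moreover have "(A/D - B/D)^2 - (q-r)^2 * (A/D * (B/D)) = ((A - B)^2 - (q-r)^2 * (A * B))/D^2"
    using d1 unfolding D_def[symmetric] by (simp add: field_simps power2_eq_square)
  ultimately show ?thesis using id d1 unfolding D_def[symmetric] r_def[symmetric] by simp
qed

lemma beta_zero:
  fixes q a b Xa Xb :: complex
  assumes q0: "q \<noteq> 0" and a0: "a \<noteq> 0" and b0: "b \<noteq> 0" and ab: "a \<noteq> b" and ab1: "a \<noteq> inverse b"
   and ha: "a + inverse a = Xa" and hb: "b + inverse b = Xb"
   and E: "Xa^2 + Xb^2 - (q^2 + inverse q^2) * Xa * Xb + 4 * (q - inverse q)^2 = 0"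
  shows "beta q a b = 0"
proof -
  define r where "r = inverse q"
  have qr: "q*r = 1" using q0 by (simp add: r_def)
  have ha': "a^2 + 1 = Xa * a" using ha a0 by (auto simp: field_simps power2_eq_square)
  have hb': "b^2 + 1 = Xb * b" using hb b0 by (auto simp: field_simps power2_eq_square)
  have n1: "a - b \<noteq> 0" using ab by simp
  have n2: "b * a - 1 \<noteq> 0" using ab1 b0 by (auto simp: field_simps)
  have E': "Xa^2 + Xb^2 - (q^2 + r^2) * Xa * Xb + 4 * (q - r)^2 = 0" using E by (simp add: r_def)
  have key: "(a-b)^2 * (b*a-1)^2 = (q-r)^2 * (a*b*(b*a-1)^2 + b*a*(a-b)^2)"
    using ha' hb' qr E' by algebra
  have f1: "inverse b * a / (inverse b * a - 1)^2 = a*b/(a-b)^2"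
    using b0 n1 by (simp add: field_simps power2_eq_square)
  have f2: "a*b/(a-b)^2 + b*a/(b*a-1)^2 = (a*b*(b*a-1)^2 + b*a*(a-b)^2) / ((a-b)^2 * (b*a-1)^2)"
    using n1 n2 by (simp add: field_simps)
  have nz: "(a-b)^2 * (b*a-1)^2 \<noteq> 0" using n1 n2 by simp
  show ?thesis unfolding beta_def r_def[symmetric] f1 f2
    using key nz by (simp add: field_simps)
qed

lemma qint_diff:
  fixes q :: complex
  assumes q0: "q \<noteq> 0" and q4: "q^4 \<noteq> 1"
  shows "qint q (m+1) - qint q m = (q^(2*m+1) + inverse q^(2*m+1))/(q + inverse q)"
proof -
  define r where "r = inverse q"
  have qr: "q*r = 1" using q0 by (simp add: r_def)
  have d1: "q\<^sup>2 - r ^ 2 \<noteq> 0"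
  proof
    assume "q\<^sup>2 - r ^ 2 = 0"
    hence "q^4 = 1" using qr by algebra
    thus False using q4 by simp
  qed
  have d2: "q + r \<noteq> 0"
  proof
    assume "q + r = 0"
    hence "q^4 = 1" using qr by algebra
    thus False using q4 by simp
  qed
  define Q where "Q = q^m"
  define R where "R = r^m"
  have QR: "Q*R = 1" using qr by (simp add: Q_def R_def flip: power_mult_distrib)
  have e1: "q^(2*m) = Q^2" "q^(2*(m+1)) = Q^2*q^2" "q^(2*m+1) = Q^2*q"
    "r^(2*m) = R^2" "r^(2*(m+1)) = R^2*r^2" "r^(2*m+1) = R^2*r"
    by (simp_all add: Q_def R_def power_add mult_2 power2_eq_square)
  have "(Q^2*q^2 - R^2*r^2 - (Q^2 - R^2)) * (q + r) = (Q^2*q + R^2*r) * (q\<^sup>2 - r ^ 2)"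
    using qr QR by algebra
  then show ?thesis unfolding qint_def e1 r_def[symmetric] diff_divide_distrib[symmetric]
    using d1 d2 by (simp add: frac_eq_eq)
qed

lemma xm_props:
  fixes q :: complex
  assumes q0: "q \<noteq> 0" and q4: "q^4 \<noteq> 1" and hs: "(s m)\<^sup>2 = qint q (m+1) * qint q m"
  shows "xm q s m \<noteq> 0 \<and> xm q s m + inverse (xm q s m) = 2 * ((q^(2*m+1) + inverse q^(2*m+1))/(q + inverse q))"
proof -
  define d where "d = qint q (m+1) - qint q m"
  define t where "t = q - inverse q"
  have x: "xm q s m = d - t * s m" by (simp add: xm_def d_def t_def)
  have "(d - t * s m) * (d + t * s m) = 1"
    using prod_one[OF q0 q4, of m] hs unfolding d_def[symmetric] t_def[symmetric]
    by (simp add: algebra_simps power2_eq_square)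
  hence "xm q s m \<noteq> 0" "inverse (xm q s m) = d + t * s m"
    unfolding x by (auto simp: inverse_unique)
  thus ?thesis using qint_diff[OF q0 q4, of m] unfolding x d_def by simp
qed

lemma divhelp:
  fixes S U V c k :: complex
  assumes "S \<noteq> 0"
  shows "(U/S)^2 + (V/S)^2 - c * (U/S) * (V/S) + k = (U^2 + V^2 - c * U * V + k * S^2) / S^2"
  using assms by (simp add: field_simps power2_eq_square)

theorem lemma2p31:
  fixes N :: nat and q :: complex and s :: "nat \<Rightarrow> complex"
  assumes "N \<ge> 2"
    and "primitive_root (4*N) q"
    and "q ^ N = \<i>"
    and "\<And>m. (s m)\<^sup>2 = qint q (m+1) * qint q m"
  shows "(xm q s N = -1 \<and> xm q s (N - 1) = -1) \<and>
         (\<forall>lam T k. strict_partition lam \<longrightarrow> standard_shifted_tableau lam T \<longrightarrow>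
           1 \<le> k \<longrightarrow> k < sum_list lam \<longrightarrow>
           xm q s (tab_m lam T k) \<noteq> xm q s (tab_m lam T (k+1)) \<longrightarrow>
           xm q s (tab_m lam T k) \<noteq> inverse (xm q s (tab_m lam T (k+1))) \<longrightarrow>
           tab_m lam T k + tab_m lam T (k+1) + 2 = 2*N \<longrightarrow>
           beta q (xm q s (tab_m lam T k)) (xm q s (tab_m lam T (k+1))) = 0)"
proof -
  have q4N: "q^(4*N) = 1" and q4: "q^4 \<noteq> 1" using assms(1,2) unfolding primitive_root_def by auto
  have q0: "q \<noteq> 0" using q4N assms(1) by (auto simp: power_0_left)
  define r where "r = inverse q"
  have qr: "q*r = 1" using q0 by (simp add: r_def)
  have q2N: "q^(2*N) = -1" using assms(3) by (simp add: power_mult mult.commute[of 2] power2_eq_square)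
  have r2N: "r^(2*N) = -1" using q2N by (simp add: r_def power_inverse)
  have d1: "q\<^sup>2 - r ^ 2 \<noteq> 0"
  proof
    assume "q\<^sup>2 - r ^ 2 = 0"
    hence "q^4 = 1" using qr by algebra
    thus False using q4 by simp
  qed
  have d2: "q + r \<noteq> 0"
  proof
    assume "q + r = 0"
    hence "q^4 = 1" using qr by algebra
    thus False using q4 by simp
  qed
  have qN: "qint q N = 0" unfolding qint_def r_def[symmetric] using q2N r2N by simp
  have sN: "s N = 0" using assms(4)[of N] qN by simp
  have sN1: "s (N-1) = 0" using assms(4)[of "N-1"] qN assms(1) by simp
  have qN1: "qint q (N+1) = -1"
  proof -
    have "q^(2*(N+1)) = -(q^2)" "r^(2*(N+1)) = -(r^2)" using q2N r2N by (simp_all add: power_add power2_eq_square)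
    thus ?thesis unfolding qint_def r_def[symmetric] using d1 by (simp add: field_simps)
  qed
  have qNm1: "qint q (N-1) = 1"
  proof -
    have en: "2*(N-1) + 2 = 2*N" using assms(1) by simp
    have "q^(2*(N-1)) * q^2 = -1" "r^(2*(N-1)) * r^2 = -1" using q2N r2N
      by (simp_all only: power_add[symmetric] en)
    hence h: "q^(2*(N-1)) * q^2 = -1" "r^(2*(N-1)) * r^2 = -1" by auto
    have "\<And>X a b::complex. X * a^2 = -1 \<Longrightarrow> a*b = 1 \<Longrightarrow> X = -(b^2)" by algebra
    hence "q^(2*(N-1)) = -(r^2)" "r^(2*(N-1)) = -(q^2)" using h qr by (metis, metis mult.commute)
    thus ?thesis unfolding qint_def r_def[symmetric] using d1 by (simp add: field_simps)
  qed
  have partA: "xm q s N = -1 \<and> xm q s (N - 1) = -1"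
    using sN sN1 qN qN1 qNm1 assms(1) by (simp add: xm_def)
  have partB: "beta q (xm q s m1) (xm q s m2) = 0"
    if h1: "xm q s m1 \<noteq> xm q s m2" and h2: "xm q s m1 \<noteq> inverse (xm q s m2)"
      and h3: "m1 + m2 + 2 = 2*N" for m1 m2
  proof -
    from xm_props[of q s m1, OF q0 q4 assms(4)[of m1]] have x1: "xm q s m1 \<noteq> 0"
      "xm q s m1 + inverse (xm q s m1) = 2 * ((q^(2*m1+1) + r^(2*m1+1))/(q + r))"
      by (simp_all add: r_def power_inverse)
    from xm_props[of q s m2, OF q0 q4 assms(4)[of m2]] have x2: "xm q s m2 \<noteq> 0"
      "xm q s m2 + inverse (xm q s m2) = 2 * ((q^(2*m2+1) + r^(2*m2+1))/(q + r))"
      by (simp_all add: r_def power_inverse)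
    define P where "P = q^(2*m1+1)"
    define Pi where "Pi = r^(2*m1+1)"
    have PPi: "P * Pi = 1" unfolding P_def Pi_def by (simp only: power_mult_distrib[symmetric] qr power_one)
    have ex: "(2*m2+1) + ((2*m1+1) + 2) = 4*N" using h3 by simp
    have r4N: "r^(4*N) = 1" using q4N by (simp add: r_def power_inverse)
    have "q^(2*m2+1) * (P*q^2) = q^((2*m2+1) + ((2*m1+1) + 2))" unfolding P_def
      by (simp only: power_add mult.assoc)
    hence "q^(2*m2+1) * (P*q^2) = 1" using q4N by (simp only: ex)
    moreover have gen: "\<And>X P Pi a b::complex. X * (P*a^2) = 1 \<Longrightarrow> P*Pi = 1 \<Longrightarrow> a*b = 1 \<Longrightarrow> X = Pi*b^2"
      by algebra
    ultimately have e2: "q^(2*m2+1) = Pi * r^2" using PPi qr by blast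
    have "r^(2*m2+1) * (Pi*r^2) = r^((2*m2+1) + ((2*m1+1) + 2))" unfolding Pi_def
      by (simp only: power_add mult.assoc)
    hence "r^(2*m2+1) * (Pi*r^2) = 1" using r4N by (simp only: ex)
    hence e3: "r^(2*m2+1) = P * q^2" using gen[of "r^(2*m2+1)" Pi r P q] PPi qr by (simp add: mult.commute)
    define U where "U = 2*(P + Pi)"
    define V where "V = 2*(Pi * r^2 + P * q^2)"
    have xa: "xm q s m1 + inverse (xm q s m1) = U/(q+r)" using x1(2) by (simp add: U_def P_def Pi_def)
    have xb: "xm q s m2 + inverse (xm q s m2) = V/(q+r)" unfolding x2(2) e2 e3 V_def by simp
    have idE: "U^2 + V^2 - (q^2 + r^2) * U * V + 4 * (q - r)^2 * (q+r)^2 = 0"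
      unfolding U_def V_def using PPi qr by algebra
    have E: "(U/(q+r))^2 + (V/(q+r))^2 - (q^2 + inverse q^2) * (U/(q+r)) * (V/(q+r)) + 4 * (q - inverse q)^2 = 0"
    proof -
      have "(U/(q+r))^2 + (V/(q+r))^2 - (q^2 + r^2) * (U/(q+r)) * (V/(q+r)) + 4 * (q - r)^2
          = (U^2 + V^2 - (q^2 + r^2) * U * V + 4 * (q - r)^2 * (q+r)^2) / (q+r)^2"
        using d2 by (rule divhelp)
      thus ?thesis using idE by (simp add: r_def)
    qed
    show ?thesis by (rule beta_zero[OF q0 x1(1) x2(1) h1 h2 xa xb E])
  qed
  show ?thesis using partA partB by blast
qed

end
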